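(* Let $\ell\le L_1$ be positive integers and $L\ge2$. For every $(p,n,L_1)$-multi-labelling $\mathcal M$ of an $L$-graph, $\Delta(\mathcal M)\ge0$.
   Context: An $L$-graph is a single cycle with $2L$ vertices and $2L$ edges whose vertices alternate between "$n$-vertices" and "$p$-vertices" (so there are $L$ of each). A $(p,n,L_1)$-multi-labelling assigns to each $n$-vertex an $n$-label in $[n]$ and to the $r$-th $p$-vertex ($r=1,\dots,L$) a tuple of $d_r$ $p$-labels in $[p]$, such that: (i) the $n$-label of each $n$-vertex differs from the $n$-labels of the two $n$-vertices immediately preceding and following it in the cycle; (ii) $\ell\le d_r\le L_1$ and the $d_r$ $p$-labels of each tuple are distinct; (iii) for each $n$-label $i$ and $p$-label $j$, the number of edges of the cycle whose $n$-vertex endpoint has label $i$ and whose $p$-vertex endpoint has $j$ in its tuple is either $0$ or at least $2$. Let $r(\mathcal M)$ be the number of distinct $n$-labels and $c(\mathcal M)$ the number of distinct $p$-labels (elements of $[p]$) used. The excess is $\Delta(\mathcal M)=1+\frac L2+\sum_{r=1}^L\frac{d_r}{2\ell}-r(\mathcal M)-\frac{c(\mathcal M)}{\ell}$. *)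

theory Defs
  imports Main Complex_Main
begin

text \<open>An L-graph: the cycle n_0, p_0, n_1, p_1, ..., n_(L-1), p_(L-1), n_0.
  n-vertices and p-vertices are both indexed by r < L (0-based).
  Its 2L edges are (n_r, p_r) and (p_r, n_((r+1) mod L)) for r < L.
  A multi-labelling is given by nl :: nat => nat (n-label of n_r) and
  pl :: nat => nat list (the tuple of p-labels of p_r; d_r = length (pl r)).\<close>

definition edge_count :: "nat \<Rightarrow> (nat \<Rightarrow> nat) \<Rightarrow> (nat \<Rightarrow> nat list) \<Rightarrow> nat \<Rightarrow> nat \<Rightarrow> nat" where
  "edge_count L nl pl i j =
     card {r. r < L \<and> nl r = i \<and> j \<in> set (pl r)}
   + card {r. r < L \<and> nl (Suc r mod L) = i \<and> j \<in> set (pl r)}"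

definition multi_labelling ::
  "nat \<Rightarrow> nat \<Rightarrow> nat \<Rightarrow> nat \<Rightarrow> nat \<Rightarrow> (nat \<Rightarrow> nat) \<Rightarrow> (nat \<Rightarrow> nat list) \<Rightarrow> bool" where
  "multi_labelling p n L1 ell L nl pl \<longleftrightarrow>
     (\<forall>r<L. nl r \<in> {1..n}) \<and>
     (\<forall>r<L. set (pl r) \<subseteq> {1..p}) \<and>
     (\<forall>r<L. nl r \<noteq> nl (Suc r mod L) \<and> nl r \<noteq> nl ((r + L - 1) mod L)) \<and>
     (\<forall>r<L. ell \<le> length (pl r) \<and> length (pl r) \<le> L1 \<and> distinct (pl r)) \<and>
     (\<forall>i j. edge_count L nl pl i j = 0 \<or> edge_count L nl pl i j \<ge> 2)"

definition num_nlabels :: "nat \<Rightarrow> (nat \<Rightarrow> nat) \<Rightarrow> nat" where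
  "num_nlabels L nl = card (nl ` {..<L})"

definition num_plabels :: "nat \<Rightarrow> (nat \<Rightarrow> nat list) \<Rightarrow> nat" where
  "num_plabels L pl = card (\<Union>r<L. set (pl r))"

definition excess :: "nat \<Rightarrow> nat \<Rightarrow> (nat \<Rightarrow> nat) \<Rightarrow> (nat \<Rightarrow> nat list) \<Rightarrow> real" where
  "excess ell L nl pl =
     1 + real L / 2 + (\<Sum>r<L. real (length (pl r)) / (2 * real ell))
     - real (num_nlabels L nl) - real (num_plabels L pl) / real ell"

end

theory Submission
  imports Defs
begin

definition NewS :: "nat \<Rightarrow> (nat \<Rightarrow> nat) \<Rightarrow> nat set" where
  "NewS L nl = {s. Suc s < L \<and> nl (Suc s) \<notin> nl ` {..s}}"

definition fv :: "(nat \<Rightarrow> nat) \<Rightarrow> nat \<Rightarrow> nat" where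
  "fv nl x = (LEAST t. nl t = x)"

lemma fv_le: "fv nl (nl r) \<le> r"
  unfolding fv_def by (rule Least_le) simp

lemma fv_eq: "nl (fv nl (nl r)) = nl r"
  unfolding fv_def by (rule LeastI) simp

lemma fv_min: "t < fv nl x \<Longrightarrow> nl t \<noteq> x"
  unfolding fv_def using not_less_Least by blast

lemma new_fv: "s \<in> NewS L nl \<Longrightarrow> fv nl (nl (Suc s)) = Suc s"
proof -
  assume s: "s \<in> NewS L nl"
  have "fv nl (nl (Suc s)) \<le> Suc s" by (rule fv_le)
  moreover have "\<not> fv nl (nl (Suc s)) \<le> s"
  proof
    assume "fv nl (nl (Suc s)) \<le> s"
    then have "nl (Suc s) \<in> nl ` {..s}" using fv_eq[of nl "Suc s"] by (metis atMost_iff imageI)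
    then show False using s unfolding NewS_def by auto
  qed
  ultimately show ?thesis by linarith
qed

lemma card_new: "card (nl ` {..<Suc k}) = Suc (card {s. s < k \<and> nl (Suc s) \<notin> nl ` {..s}})"
proof (induction k)
  case 0
  then show ?case by (simp add: lessThan_Suc)
next
  case (Suc k)
  have im: "nl ` {..<Suc (Suc k)} = insert (nl (Suc k)) (nl ` {..<Suc k})"
    by (auto simp: lessThan_Suc)
  have eqs: "{..<Suc k} = {..k}" by auto
  show ?case
  proof (cases "nl (Suc k) \<in> nl ` {..k}")
    case True
    have "{s. s < Suc k \<and> nl (Suc s) \<notin> nl ` {..s}} = {s. s < k \<and> nl (Suc s) \<notin> nl ` {..s}}"
      using True less_Suc_eq by auto
    then show ?thesis using Suc True im eqs by (simp add: insert_absorb)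
  next
    case False
    have "{s. s < Suc k \<and> nl (Suc s) \<notin> nl ` {..s}} = insert k {s. s < k \<and> nl (Suc s) \<notin> nl ` {..s}}"
      using False less_Suc_eq by auto
    then show ?thesis using Suc False im eqs by simp
  qed
qed

context
  fixes L :: nat and nl :: "nat \<Rightarrow> nat" and pl :: "nat \<Rightarrow> nat list"
  assumes L2: "2 \<le> L"
    and adj: "\<forall>r<L. nl r \<noteq> nl (Suc r mod L)"
    and ec: "\<forall>i j. edge_count L nl pl i j = 0 \<or> edge_count L nl pl i j \<ge> 2"
begin

lemma deg_contra:
  assumes "card {r. r < L \<and> nl r = x \<and> j \<in> set (pl r)}
         + card {r. r < L \<and> nl (Suc r mod L) = x \<and> j \<in> set (pl r)} = 1"
  shows False
  proof -
  have "edge_count L nl pl x j = 1" using assms unfolding edge_count_def .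
  then show False using ec by (metis one_neq_zero numeral_le_one_iff semiring_norm(69))
qed

lemma new_lt: "s \<in> NewS L nl \<Longrightarrow> Suc s < L"
  unfolding NewS_def by auto

lemma new_mod: "s \<in> NewS L nl \<Longrightarrow> Suc s mod L = Suc s"
  using new_lt by simp

lemma maxnew_touch:
  assumes ne: "{r. r < L \<and> j \<in> set (pl r)} \<inter> NewS L nl \<noteq> {}"
  defines "s \<equiv> Max ({r. r < L \<and> j \<in> set (pl r)} \<inter> NewS L nl)"
  shows "\<exists>e. e < L \<and> e \<notin> NewS L nl \<and> j \<in> set (pl e) \<and>
            (nl e = nl (Suc s) \<or> nl (Suc e mod L) = nl (Suc s))"
proof (rule ccontr)
  assume H: "\<not> ?thesis"
  let ?S = "{r. r < L \<and> j \<in> set (pl r)} \<inter> NewS L nl"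
  have fin: "finite ?S" by auto
  have sS: "s \<in> ?S" unfolding s_def using Max_in[OF fin ne] .
  have sN: "s \<in> NewS L nl" using sS by auto
  have smax: "\<And>r. r \<in> ?S \<Longrightarrow> r \<le> s" unfolding s_def using fin by auto
  have sfresh: "nl (Suc s) \<notin> nl ` {..s}" using sN unfolding NewS_def by auto
  have A1: "{r. r < L \<and> nl r = nl (Suc s) \<and> j \<in> set (pl r)} = {}"
  proof -
    { fix r assume r: "r < L" "nl r = nl (Suc s)" "j \<in> set (pl r)"
      have "r \<in> NewS L nl" using H r by blast
      then have "r \<le> s" using smax r by auto
      then have False using sfresh r by (metis atMost_iff image_eqI) }
    then show ?thesis by blast
  qed
  have A2: "{r. r < L \<and> nl (Suc r mod L) = nl (Suc s) \<and> j \<in> set (pl r)} = {s}"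
  proof -
    { fix r assume r: "r < L" "nl (Suc r mod L) = nl (Suc s)" "j \<in> set (pl r)"
      have rN: "r \<in> NewS L nl" using H r by blast
      then have "r \<le> s" using smax r by auto
      moreover have "\<not> r < s"
      proof
        assume "r < s"
        then have "nl (Suc r) \<in> nl ` {..s}" by auto
        then show False using sfresh r new_mod[OF rN] by auto
      qed
      ultimately have "r = s" by auto }
    moreover have "s < L" "j \<in> set (pl s)" using sS by auto
    ultimately show ?thesis using new_mod[OF sN] by auto
  qed
  show False using deg_contra[of "nl (Suc s)" j] A1 A2 by simp
qed

lemma old_exists:
  assumes "r0 < L" "j \<in> set (pl r0)"
  shows "\<exists>e. e < L \<and> e \<notin> NewS L nl \<and> j \<in> set (pl e)"
proof (rule ccontr)
  assume H: "\<not> ?thesis"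
  then have "r0 \<in> NewS L nl" using assms by blast
  then have "{r. r < L \<and> j \<in> set (pl r)} \<inter> NewS L nl \<noteq> {}" using assms by blast
  from maxnew_touch[OF this] H show False by blast
qed

definition phi :: "nat \<Rightarrow> nat" where
  "phi e = max (fv nl (nl e)) (fv nl (nl (Suc e mod L))) - 1"

lemma phi_new:
  assumes "e < L"
  shows "phi e \<in> NewS L nl"
proof -
  let ?u = "nl e" and ?v = "nl (Suc e mod L)"
  have uv: "?u \<noteq> ?v" using adj assms by auto
  have fu: "nl (fv nl ?u) = ?u" "fv nl ?u \<le> e" using fv_eq fv_le by auto
  have fv': "nl (fv nl ?v) = ?v" "fv nl ?v \<le> Suc e mod L" using fv_eq fv_le by auto
  have vL: "Suc e mod L < L" using L2 by simp
  have ne: "fv nl ?u \<noteq> fv nl ?v" using fu fv' uv by metis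
  define w where "w = (if fv nl ?u \<le> fv nl ?v then ?v else ?u)"
  have w: "w = ?u \<or> w = ?v" "fv nl w = max (fv nl ?u) (fv nl ?v)"
    unfolding w_def by (auto simp: max_def)
  have wpos: "fv nl w > 0" using w(2) ne by linarith
  have wL: "fv nl w < L"
  proof -
    have "fv nl ?u < L" using fu(2) assms by linarith
    moreover have "fv nl ?v < L" using fv'(2) vL by linarith
    ultimately show ?thesis using w(2) by linarith
  qed
  have nw: "nl (fv nl w) = w" using w(1) fu(1) fv'(1) by metis
  have pe: "phi e = fv nl w - 1" unfolding phi_def using w by simp
  have "Suc (phi e) = fv nl w" using pe wpos by simp
  moreover have "w \<notin> nl ` {..phi e}"
  proof
    assume "w \<in> nl ` {..phi e}"
    then obtain t where "t \<le> phi e" "nl t = w" by auto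
    then show False using fv_min[of t nl w] pe wpos by auto
  qed
  ultimately show ?thesis unfolding NewS_def using wL nw by auto
qed

lemma phi_label:
  assumes e: "e < L" "e \<notin> NewS L nl" "j \<in> set (pl e)"
    and uniq: "\<And>e'. e' < L \<Longrightarrow> e' \<notin> NewS L nl \<Longrightarrow> j \<in> set (pl e') \<Longrightarrow> e' = e"
  shows "j \<in> set (pl (phi e))"
proof -
  let ?S = "{r. r < L \<and> j \<in> set (pl r)} \<inter> NewS L nl"
  have uv: "nl e \<noteq> nl (Suc e mod L)" using adj e by auto
  have ne: "?S \<noteq> {}"
  proof
    assume emp: "?S = {}"
    have only: "\<And>r. r < L \<Longrightarrow> j \<in> set (pl r) \<Longrightarrow> r = e"
    proof -
      fix r assume r: "r < L" "j \<in> set (pl r)"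
      then have "r \<notin> NewS L nl" using emp by blast
      then show "r = e" using uniq r by blast
    qed
    have "{r. r < L \<and> nl r = nl e \<and> j \<in> set (pl r)} = {e}"
      using e by (auto dest: only)
    moreover have "{r. r < L \<and> nl (Suc r mod L) = nl e \<and> j \<in> set (pl r)} = {}"
      using uv by (auto dest: only)
    ultimately show False using deg_contra[of "nl e" j] by simp
  qed
  define s where "s = Max ?S"
  have fin: "finite ?S" by auto
  have sS: "s \<in> ?S" unfolding s_def using Max_in[OF fin ne] .
  have sN: "s \<in> NewS L nl" using sS by auto
  have smax: "\<And>r. r \<in> ?S \<Longrightarrow> r \<le> s" unfolding s_def using fin by auto
  define b where "b = nl (Suc s)"
  have fvb: "fv nl b = Suc s" unfolding b_def using new_fv[OF sN] .
  obtain e' where e': "e' < L" "e' \<notin> NewS L nl" "j \<in> set (pl e')"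
     "nl e' = b \<or> nl (Suc e' mod L) = b"
    using maxnew_touch[OF ne] unfolding s_def b_def by blast
  have ee: "e' = e" using uniq e'(1,2,3) by blast
  obtain x where x: "(nl e = b \<and> x = nl (Suc e mod L)) \<or> (nl (Suc e mod L) = b \<and> x = nl e)"
    using e' ee by blast
  have xb: "x \<noteq> b" using x uv by auto
  have vL: "Suc e mod L < L" using L2 by simp
  have xfv: "nl (fv nl x) = x" using x fv_eq by metis
  have "fv nl x < Suc s"
  proof (rule ccontr)
    assume "\<not> fv nl x < Suc s"
    moreover have "fv nl x \<noteq> Suc s" using xfv xb b_def by auto
    ultimately have big: "Suc s < fv nl x" by auto
    have other: "\<And>r. r < L \<Longrightarrow> j \<in> set (pl r) \<Longrightarrow> r \<noteq> e \<Longrightarrow> nl r \<noteq> x \<and> nl (Suc r mod L) \<noteq> x"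
    proof -
      fix r assume r: "r < L" "j \<in> set (pl r)" "r \<noteq> e"
      then have rN: "r \<in> NewS L nl" using uniq[of r] by blast
      then have "r \<le> s" using smax r by auto
      then show "nl r \<noteq> x \<and> nl (Suc r mod L) \<noteq> x"
        using fv_min[of r nl x] fv_min[of "Suc r" nl x] big new_mod[OF rN] by auto
    qed
    show False
    proof (cases "nl e = x")
      case True
      have "{r. r < L \<and> nl r = x \<and> j \<in> set (pl r)} = {e}" using other[of _] e True by auto
      moreover have "{r. r < L \<and> nl (Suc r mod L) = x \<and> j \<in> set (pl r)} = {}"
      proof -
        { fix r assume r: "r < L" "nl (Suc r mod L) = x" "j \<in> set (pl r)"
          have False
          proof (cases "r = e")
            case True
            then show False using r uv \<open>nl e = x\<close> by simp
          next
            case False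
            then show False using other[OF r(1) r(3) False] r(2) by simp
          qed }
        then show ?thesis by blast
      qed
      ultimately show False using deg_contra[of x j] by simp
    next
      case False
      then have xv: "nl (Suc e mod L) = x" using x by auto
      have "{r. r < L \<and> nl r = x \<and> j \<in> set (pl r)} = {}" 
      proof -
        { fix r assume r: "r < L" "nl r = x" "j \<in> set (pl r)"
          have False
          proof (cases "r = e")
            case True
            then show False using r \<open>nl e \<noteq> x\<close> by simp
          next
            case False
            then show False using other[OF r(1) r(3) False] r(2) by simp
          qed }
        then show ?thesis by blast
      qed
      moreover have "{r. r < L \<and> nl (Suc r mod L) = x \<and> j \<in> set (pl r)} = {e}"
        using other[of _] e xv by auto
      ultimately show False using deg_contra[of x j] by simp
    qed
  qed
  then have "max (fv nl (nl e)) (fv nl (nl (Suc e mod L))) = Suc s"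
    using x fvb by (auto simp: max_def)
  then have "phi e = s" unfolding phi_def by simp
  then show ?thesis using sS by auto
qed


lemma dc:
  assumes R: "R \<subseteq> {..<L}"
  shows "(\<Sum>r\<in>R. card (set (pl r))) = (\<Sum>j\<in>(\<Union>r<L. set (pl r)). card {r\<in>R. j \<in> set (pl r)})"
proof -
  let ?P = "\<Union>r<L. set (pl r)"
  have finR: "finite R" using R finite_subset by blast
  have finP: "finite ?P" by auto
  have eq: "\<And>r. r \<in> R \<Longrightarrow> {y \<in> ?P. y \<in> set (pl r)} = set (pl r)" using R by auto
  have "(\<Sum>r\<in>R. card (set (pl r))) = (\<Sum>r\<in>R. \<Sum>y\<in>{y \<in> ?P. y \<in> set (pl r)}. (1::nat))"
    using eq by simp
  also have "\<dots> = (\<Sum>j\<in>?P. \<Sum>x\<in>{x \<in> R. j \<in> set (pl x)}. (1::nat))"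
    using sum.swap_restrict[OF finR finP, of "\<lambda>_ _. 1::nat" "\<lambda>r j. j \<in> set (pl r)"] by simp
  also have "\<dots> = (\<Sum>j\<in>?P. card {r\<in>R. j \<in> set (pl r)})" by simp
  finally show ?thesis .
qed

lemma main_ineq:
  assumes ellc: "\<forall>r<L. ell \<le> card (set (pl r))"
  shows "ell * card (NewS L nl) + 2 * card (\<Union>r<L. set (pl r))
         \<le> (\<Sum>r<L. card (set (pl r))) + ell * card ({..<L} - NewS L nl)"
proof -
  define N where "N = NewS L nl"
  define Od where "Od = {..<L} - N"
  define P where "P = (\<Union>r<L. set (pl r))"
  define SN where "SN j = {r\<in>N. j \<in> set (pl r)}" for j
  define SO where "SO j = {r\<in>Od. j \<in> set (pl r)}" for j
  have NL: "N \<subseteq> {..<L}" unfolding N_def using new_lt Suc_lessD by blast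
  have finN: "finite N" using NL finite_subset by blast
  have finO: "finite Od" unfolding Od_def by auto
  have finP: "finite P" unfolding P_def by auto
  have finSN: "finite (SN j)" for j unfolding SN_def using finN by auto
  have finSO: "finite (SO j)" for j unfolding SO_def using finO by auto
  have split: "card {r\<in>{..<L}. j \<in> set (pl r)} = card (SN j) + card (SO j)" for j
  proof -
    have "{r\<in>{..<L}. j \<in> set (pl r)} = SN j \<union> SO j" unfolding SN_def SO_def Od_def using NL by auto
    moreover have "SN j \<inter> SO j = {}" unfolding SN_def SO_def Od_def by auto
    ultimately show ?thesis using finSN finSO card_Un_disjoint by metis
  qed
  have SOpos: "card (SO j) \<ge> 1" if jP: "j \<in> P" for j
  proof -
    obtain r0 where "r0 < L" "j \<in> set (pl r0)" using jP unfolding P_def by auto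
    from old_exists[OF this] obtain e where "e < L" "e \<notin> NewS L nl" "j \<in> set (pl e)" by blast
    then have "e \<in> SO j" unfolding SO_def Od_def N_def by auto
    then have "SO j \<noteq> {}" by auto
    then show ?thesis using finSO[of j] by (simp add: Suc_le_eq card_gt_0_iff)
  qed
  define Q where "Q = {j\<in>P. card (SO j) = 1}"
  have finQ: "finite Q" unfolding Q_def using finP by auto
  have QP: "Q \<subseteq> P" unfolding Q_def by auto
  have perj: "card (SN j) + 2 \<le> card {r\<in>{..<L}. j \<in> set (pl r)} + (if j \<in> Q then 1 else 0)"
    if "j \<in> P" for j
    using split[of j] SOpos[OF that] that unfolding Q_def by auto
  have sum1: "(\<Sum>j\<in>P. card (SN j)) + 2 * card P \<le> (\<Sum>j\<in>P. card {r\<in>{..<L}. j \<in> set (pl r)}) + card Q"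
  proof -
    have "(\<Sum>j\<in>P. card (SN j) + 2) \<le> (\<Sum>j\<in>P. card {r\<in>{..<L}. j \<in> set (pl r)} + (if j \<in> Q then 1 else 0))"
      using perj by (rule sum_mono)
    moreover have "(\<Sum>j\<in>P. (if j \<in> Q then 1 else 0::nat)) = card Q"
      using QP finP by (simp add: sum.If_cases Int_absorb1)
    moreover have "(\<Sum>j\<in>P. card (SN j) + 2) = (\<Sum>j\<in>P. card (SN j)) + 2 * card P"
      by (simp only: sum.distrib sum_constant) simp
    moreover have "(\<Sum>j\<in>P. card {r\<in>{..<L}. j \<in> set (pl r)} + (if j \<in> Q then 1 else 0))
       = (\<Sum>j\<in>P. card {r\<in>{..<L}. j \<in> set (pl r)}) + (\<Sum>j\<in>P. (if j \<in> Q then 1 else 0::nat))"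
      by (rule sum.distrib)
    ultimately show ?thesis by linarith
  qed
  define g where "g j = phi (the_elem (SO j))" for j
  have gprop: "g j \<in> N \<and> j \<in> set (pl (g j)) \<and> the_elem (SO j) \<in> Od \<and> phi (the_elem (SO j)) = g j"
    if "j \<in> Q" for j
  proof -
    have "card (SO j) = 1" using that unfolding Q_def by auto
    then obtain e where e: "SO j = {e}" by (auto simp: card_Suc_eq)
    then have te: "the_elem (SO j) = e" by simp
    have eO: "e \<in> Od" "j \<in> set (pl e)" using e unfolding SO_def by auto
    have eL: "e < L" "e \<notin> NewS L nl" using eO unfolding Od_def N_def by auto
    have uniq: "e' = e" if "e' < L" "e' \<notin> NewS L nl" "j \<in> set (pl e')" for e'
    proof -
      have "e' \<in> SO j" unfolding SO_def Od_def N_def using that by auto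
      then show ?thesis using e by auto
    qed
    have "j \<in> set (pl (phi e))" using phi_label[OF eL eO(2) uniq] by blast
    moreover have "phi e \<in> N" unfolding N_def using phi_new[OF eL(1)] .
    ultimately show ?thesis using te eO unfolding g_def by auto
  qed
  have phiN: "phi e \<in> N" if "e \<in> Od" for e using phi_new that unfolding Od_def N_def by auto
  have cQ: "card Q = (\<Sum>f\<in>N. card {j\<in>Q. g j = f})"
  proof -
    have "g ` Q \<subseteq> N" using gprop by auto
    from sum.group[OF finQ finN this, of "\<lambda>_. 1::nat"] show ?thesis by simp
  qed
  have cO: "card Od = (\<Sum>f\<in>N. card {e\<in>Od. phi e = f})"
  proof -
    have "phi ` Od \<subseteq> N" using phiN by auto
    from sum.group[OF finO finN this, of "\<lambda>_. 1::nat"] show ?thesis by simp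
  qed
  have perf: "card {j\<in>Q. g j = f} + ell \<le> card (set (pl f)) + ell * card {e\<in>Od. phi e = f}"
    if "f \<in> N" for f
  proof (cases "{j\<in>Q. g j = f} = {}")
    case True
    then have "card {j\<in>Q. g j = f} = 0" by (metis card.empty)
    moreover have "ell \<le> card (set (pl f))" using ellc NL that by auto
    ultimately show ?thesis by linarith
  next
    case False
    then obtain j where j: "j \<in> Q" "g j = f" by auto
    have "the_elem (SO j) \<in> {e\<in>Od. phi e = f}" using gprop[OF j(1)] j(2) by auto
    moreover have "finite {e\<in>Od. phi e = f}" using finO by auto
    ultimately have "card {e\<in>Od. phi e = f} \<ge> 1"
      by (metis One_nat_def Suc_leI card_gt_0_iff empty_iff)
    then have "ell \<le> ell * card {e\<in>Od. phi e = f}" by simp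
    moreover have "card {j\<in>Q. g j = f} \<le> card (set (pl f))"
      using gprop by (intro card_mono) auto
    ultimately show ?thesis by linarith
  qed
  have sum2: "card Q + ell * card N \<le> (\<Sum>f\<in>N. card (set (pl f))) + ell * card Od"
  proof -
    have "(\<Sum>f\<in>N. card {j\<in>Q. g j = f} + ell) \<le> (\<Sum>f\<in>N. card (set (pl f)) + ell * card {e\<in>Od. phi e = f})"
      using perf by (rule sum_mono)
    then show ?thesis using cQ cO by (simp add: sum.distrib sum_distrib_left mult.commute)
  qed
  have e1: "(\<Sum>f\<in>N. card (set (pl f))) = (\<Sum>j\<in>P. card (SN j))"
    unfolding P_def SN_def using dc[OF NL] by simp
  have e2: "(\<Sum>r<L. card (set (pl r))) = (\<Sum>j\<in>P. card {r\<in>{..<L}. j \<in> set (pl r)})"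
    unfolding P_def using dc[of "{..<L}"] by simp
  show ?thesis using sum1 sum2 e1 e2 unfolding N_def[symmetric] Od_def[symmetric] P_def[symmetric]
    by linarith
qed

end

theorem lemma3p8:
  fixes p n L1 ell L :: nat and nl :: "nat \<Rightarrow> nat" and pl :: "nat \<Rightarrow> nat list"
  assumes "1 \<le> ell" and "ell \<le> L1" and "2 \<le> L"
    and "multi_labelling p n L1 ell L nl pl"
  shows "excess ell L nl pl \<ge> 0"
proof -
  note ml = assms(4)[unfolded multi_labelling_def]
  have adj: "\<forall>r<L. nl r \<noteq> nl (Suc r mod L)" using ml by blast
  have ec: "\<forall>i j. edge_count L nl pl i j = 0 \<or> edge_count L nl pl i j \<ge> 2" using ml by blast
  have lenc: "\<And>r. r < L \<Longrightarrow> length (pl r) = card (set (pl r))" using ml by (simp add: distinct_card)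
  have ellc: "\<forall>r<L. ell \<le> card (set (pl r))" using ml lenc by auto
  define N where "N = NewS L nl"
  define Od where "Od = {..<L} - N"
  define c where "c = card (\<Union>r<L. set (pl r))"
  define D where "D = (\<Sum>r<L. card (set (pl r)))"
  have key: "ell * card N + 2 * c \<le> D + ell * card Od"
    using main_ineq[OF assms(3) adj ec ellc] unfolding N_def Od_def c_def D_def .
  have NL: "N \<subseteq> {..<L}" unfolding N_def NewS_def by auto
  have cNO: "card N + card Od = L"
    unfolding Od_def using NL card_Diff_subset[of N "{..<L}"] card_mono[OF _ NL]
    by (metis card_lessThan finite_lessThan finite_subset le_add_diff_inverse)
  have r: "num_nlabels L nl = Suc (card N)"
  proof -
    have "{..<Suc (L - 1)} = {..<L}" using assms(3) by auto
    moreover have "{s. s < L - 1 \<and> nl (Suc s) \<notin> nl ` {..s}} = N"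
      unfolding N_def NewS_def by auto
    ultimately show ?thesis unfolding num_nlabels_def using card_new[of nl "L - 1"] by simp
  qed
  have sd: "(\<Sum>r<L. real (length (pl r)) / (2 * real ell)) = real D / (2 * real ell)"
    unfolding D_def by (simp add: lenc sum_divide_distrib)
  have ellpos: "real ell > 0" using assms(1) by simp
  have keyr: "real ell * real (card N) + 2 * real c \<le> real D + real ell * real (card Od)"
    using key by (metis of_nat_add of_nat_le_iff of_nat_mult of_nat_numeral)
  have Lr: "real L = real (card N) + real (card Od)" using cNO by simp
  have "excess ell L nl pl = (real D + real ell * real (card Od) - real ell * real (card N) - 2 * real c) / (2 * real ell)"
    unfolding excess_def sd r num_plabels_def c_def[symmetric] Lr using ellpos
    by (simp add: field_simps)
  also have "\<dots> \<ge> 0" using keyr ellpos by simp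
  finally show ?thesis .
qed

end
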